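(* Let $f=\frac1n\sum_{i=1}^nf_i$ with each $f_i$ differentiable, $\|\nabla f_i(x)\|\le G_i$ for all $x$, and $\nabla f_i$ $L_i$-Lipschitz. Let two proper samplings be given: an outer one with marginals $p'_i$, pair matrix $\mathbf P'$ and a vector $v'$ with $\mathbf P'-p'p'^\top\preceq\mathrm{Diag}(p'_1v'_1,\dots,p'_nv'_n)$, and an inner one with marginals $p_i$, pair matrix $\mathbf P$ and a vector $v$ with $\mathbf P-pp^\top\preceq\mathrm{Diag}(p_1v_1,\dots,p_nv_n)$. Let $Q=\sum_{i=1}^n\frac{v_iL_i^2}{p_in^2}$ and $Q'=\sum_{i=1}^n\frac{v'_iG_i^2}{p'_in^2}$. For the iterates of ProxSPIDER-AS (any stepsize $\eta>0$, any inner length $m$), for every $j\ge1$ and $1\le t\le m$, $$E\big[\|\mathcal V_t^{(j)}-\nabla f(x_t^{(j)})\|^2\big]\le Q\sum_{k=1}^tE\big[\|x_k^{(j)}-x_{k-1}^{(j)}\|^2\big]+Q'.$$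
   Context: A sampling is a random subset $S\subseteq[n]$ with marginals $\mathrm{Prob}(i\in S)>0$ and pair matrix with entries $\mathrm{Prob}(\{i,j\}\subseteq S)$; $\preceq$ is the positive semidefinite order. $r:\mathbb{R}^d\to\mathbb{R}$ has proximal mapping $\mathrm{prox}_{\eta r}(y)=\arg\min_x\{\frac1{2\eta}\|x-y\|^2+r(x)\}$ (nonempty). ProxSPIDER-AS: for $j=1,2,\dots$: $x_0^{(j)}=\tilde x^{(j)}$; draw $S^{(j)}$ from the outer sampling and set $\mathcal V_0^{(j)}=\sum_{i\in S^{(j)}}\frac1{np'_i}\nabla f_i(x_0^{(j)})$; $x_1^{(j)}=x_0^{(j)}$; for $t=1,\dots,m$: draw $S_t^{(j)}$ from the inner sampling, $\mathcal V_t^{(j)}=\sum_{i\in S_t^{(j)}}\frac1{np_i}(\nabla f_i(x_t^{(j)})-\nabla f_i(x_{t-1}^{(j)}))+\mathcal V_{t-1}^{(j)}$, $x_{t+1}^{(j)}\in\mathrm{prox}_{\eta r}(x_t^{(j)}-\eta\mathcal V_t^{(j)})$; then $\tilde x^{(j+1)}=x_{m+1}^{(j)}$. All sampled sets are drawn independently of all past randomness. *)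

theory Defs
  imports "HOL-Probability.Probability"
begin

(* Indices of the n component functions are 0..n-1 (i.e. the set {..<n}). *)

definition marg :: "nat set pmf \<Rightarrow> nat \<Rightarrow> real" where
  "marg S i = measure_pmf.prob S {A. i \<in> A}"

definition pairp :: "nat set pmf \<Rightarrow> nat \<Rightarrow> nat \<Rightarrow> real" where
  "pairp S i j = measure_pmf.prob S {A. i \<in> A \<and> j \<in> A}"

definition proper_sampling :: "nat \<Rightarrow> nat set pmf \<Rightarrow> bool" where
  "proper_sampling n S \<longleftrightarrow> (\<forall>A\<in>set_pmf S. A \<subseteq> {..<n}) \<and> (\<forall>i<n. marg S i > 0)"

(* P - p p^T \<preceq> Diag(p_1 v_1, ..., p_n v_n) in the positive semidefinite order *)
definition eso :: "nat \<Rightarrow> nat set pmf \<Rightarrow> (nat \<Rightarrow> real) \<Rightarrow> bool" where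
  "eso n S v \<longleftrightarrow> (\<forall>h :: nat \<Rightarrow> real.
     (\<Sum>i<n. \<Sum>j<n. h i * h j * (pairp S i j - marg S i * marg S j))
       \<le> (\<Sum>i<n. marg S i * v i * (h i)\<^sup>2))"

definition prox :: "real \<Rightarrow> ('a::real_normed_vector \<Rightarrow> real) \<Rightarrow> 'a \<Rightarrow> 'a set" where
  "prox \<eta> r y = {x. \<forall>z. (1 / (2 * \<eta>)) * (norm (x - y))\<^sup>2 + r x
                       \<le> (1 / (2 * \<eta>)) * (norm (z - y))\<^sup>2 + r z}"

(* State (xs, Vs): xs k = x_k, Vs k = V_k.  After "inner_run ... t",
   x_0..x_{t+1} and V_0..V_t are determined.
   g i = gradient of f_i; sel t y = the chosen element of prox at inner step t. *)
primrec inner_run :: "nat \<Rightarrow> (nat \<Rightarrow> 'a \<Rightarrow> 'a) \<Rightarrow> nat set pmf \<Rightarrow> nat set pmf \<Rightarrow> real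
    \<Rightarrow> (nat \<Rightarrow> 'a \<Rightarrow> 'a::real_vector) \<Rightarrow> 'a \<Rightarrow> nat \<Rightarrow> ((nat \<Rightarrow> 'a) \<times> (nat \<Rightarrow> 'a)) pmf" where
  "inner_run n g Sout Sin \<eta> sel x0 0 =
     map_pmf (\<lambda>S. (\<lambda>k. x0, \<lambda>k. (\<Sum>i\<in>S. (1 / (real n * marg Sout i)) *\<^sub>R g i x0))) Sout"
| "inner_run n g Sout Sin \<eta> sel x0 (Suc t) =
     bind_pmf (inner_run n g Sout Sin \<eta> sel x0 t) (\<lambda>(xs, Vs).
       map_pmf (\<lambda>S.
         let V = (\<Sum>i\<in>S. (1 / (real n * marg Sin i)) *\<^sub>R (g i (xs (Suc t)) - g i (xs t))) + Vs t
         in (xs(Suc (Suc t) := sel (Suc t) (xs (Suc t) - \<eta> *\<^sub>R V)), Vs(Suc t := V))) Sin)"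

(* Distribution of the starting point of epoch (Suc j); sel j t = selection in epoch j *)
primrec outer_start :: "nat \<Rightarrow> (nat \<Rightarrow> 'a \<Rightarrow> 'a) \<Rightarrow> nat set pmf \<Rightarrow> nat set pmf \<Rightarrow> real \<Rightarrow> nat
    \<Rightarrow> (nat \<Rightarrow> nat \<Rightarrow> 'a \<Rightarrow> 'a::real_vector) \<Rightarrow> 'a \<Rightarrow> nat \<Rightarrow> 'a pmf" where
  "outer_start n g Sout Sin \<eta> m sel x1 0 = return_pmf x1"
| "outer_start n g Sout Sin \<eta> m sel x1 (Suc j) =
     bind_pmf (outer_start n g Sout Sin \<eta> m sel x1 j)
       (\<lambda>x. map_pmf (\<lambda>(xs, Vs). xs (Suc m)) (inner_run n g Sout Sin \<eta> (sel (Suc j)) x m))"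

(* Joint distribution of the whole trajectory (x_t^{(j)}, V_t^{(j)}) of epoch j (j \<ge> 1) *)
definition epoch_traj :: "nat \<Rightarrow> (nat \<Rightarrow> 'a \<Rightarrow> 'a) \<Rightarrow> nat set pmf \<Rightarrow> nat set pmf \<Rightarrow> real \<Rightarrow> nat
    \<Rightarrow> (nat \<Rightarrow> nat \<Rightarrow> 'a \<Rightarrow> 'a::real_vector) \<Rightarrow> 'a \<Rightarrow> nat \<Rightarrow> ((nat \<Rightarrow> 'a) \<times> (nat \<Rightarrow> 'a)) pmf" where
  "epoch_traj n g Sout Sin \<eta> m sel x1 j =
     bind_pmf (outer_start n g Sout Sin \<eta> m sel x1 (j - 1))
       (\<lambda>x. inner_run n g Sout Sin \<eta> (sel j) x m)"

end

theory Submission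
  imports Defs
begin

lemma pmf_integral_cong:
  fixes f g :: "'a \<Rightarrow> real"
  assumes "\<And>x. x \<in> set_pmf M \<Longrightarrow> f x = g x"
  shows "measure_pmf.expectation M f = measure_pmf.expectation M g"
  by (rule integral_cong_AE) (auto intro!: AE_pmfI assms)

lemma finite_set_bind_pmf:
  assumes "finite (set_pmf M)" "\<And>x. x \<in> set_pmf M \<Longrightarrow> finite (set_pmf (N x))"
  shows "finite (set_pmf (bind_pmf M N))"
  using assms by auto

lemma integral_bind_pmf_fin:
  fixes f :: "'b \<Rightarrow> real"
  assumes fM: "finite (set_pmf M)" and fN: "\<And>x. x \<in> set_pmf M \<Longrightarrow> finite (set_pmf (N x))"
  shows "measure_pmf.expectation (bind_pmf M N) f
         = measure_pmf.expectation M (\<lambda>x. measure_pmf.expectation (N x) f)"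
proof -
  define A where "A = set_pmf (bind_pmf M N)"
  have fA: "finite A" unfolding A_def by (rule finite_set_bind_pmf[OF assms])
  have "measure_pmf.expectation (bind_pmf M N) f = (\<Sum>a\<in>A. f a * pmf (bind_pmf M N) a)"
    by (rule integral_measure_pmf_real) (fact fA, simp add: A_def)
  also have "\<dots> = (\<Sum>a\<in>A. measure_pmf.expectation M (\<lambda>x. f a * pmf (N x) a))"
    by (simp add: pmf_bind)
  also have "\<dots> = measure_pmf.expectation M (\<lambda>x. \<Sum>a\<in>A. f a * pmf (N x) a)"
    by (simp add: integrable_measure_pmf_finite[OF fM])
  also have "\<dots> = measure_pmf.expectation M (\<lambda>x. measure_pmf.expectation (N x) f)"
  proof (rule pmf_integral_cong)
    fix x assume x: "x \<in> set_pmf M"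
    show "(\<Sum>a\<in>A. f a * pmf (N x) a) = measure_pmf.expectation (N x) f"
      by (rule integral_measure_pmf_real[symmetric]) (use x fA in \<open>auto simp: A_def\<close>)
  qed
  finally show ?thesis .
qed

lemma fin_sampling: "proper_sampling n S \<Longrightarrow> finite (set_pmf S)"
  unfolding proper_sampling_def
  by (rule finite_subset[of _ "Pow {..<n}"]) auto

lemma E_ind: "measure_pmf.expectation S (\<lambda>T. indicator {A. i \<in> A} T :: real) = marg S i"
  unfolding marg_def by simp

lemma E_pair: "measure_pmf.expectation S (\<lambda>T. indicator {A. i \<in> A} T * indicator {A. j \<in> A} T :: real) = pairp S i j"
proof -
  have "(\<lambda>T. indicator {A. i \<in> A} T * indicator {A. j \<in> A} T :: real) = indicator {A. i \<in> A \<and> j \<in> A}"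
    by (auto simp: indicator_def fun_eq_iff)
  then show ?thesis unfolding pairp_def by simp
qed

lemma E_cov:
  assumes fS: "finite (set_pmf S)"
  shows "measure_pmf.expectation S (\<lambda>T. (indicator {A. i \<in> A} T - marg S i) * (indicator {A. j \<in> A} T - marg S j) :: real)
     = pairp S i j - marg S i * marg S j"
proof -
  let ?I = "\<lambda>i T. indicator {A. i \<in> A} T :: real"
  have eq: "(\<lambda>T. (?I i T - marg S i) * (?I j T - marg S j)) =
     (\<lambda>T. (?I i T * ?I j T - marg S j * ?I i T) - (marg S i * ?I j T - marg S i * marg S j))"
    by (auto simp: fun_eq_iff algebra_simps)
  have int: "integrable (measure_pmf S) f" for f :: "nat set \<Rightarrow> real"
    by (rule integrable_measure_pmf_finite[OF fS])
  show ?thesis unfolding eq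
    by (simp add: int E_ind E_pair marg_def)
qed

lemma E_lin:
  assumes fS: "finite (set_pmf S)"
  shows "measure_pmf.expectation S (\<lambda>T. indicator {A. i \<in> A} T - marg S i :: real) = 0"
proof -
  have int: "integrable (measure_pmf S) f" for f :: "nat set \<Rightarrow> real"
    by (rule integrable_measure_pmf_finite[OF fS])
  show ?thesis by (simp add: int marg_def)
qed

lemma eso_quad:
  fixes b :: "nat \<Rightarrow> 'a::euclidean_space"
  assumes es: "eso n S v"
  shows "(\<Sum>i<n. \<Sum>j<n. (pairp S i j - marg S i * marg S j) * (b i \<bullet> b j))
         \<le> (\<Sum>i<n. marg S i * v i * (norm (b i))\<^sup>2)"
proof -
  define c where "c i j = pairp S i j - marg S i * marg S j" for i j
  have "(\<Sum>i<n. \<Sum>j<n. (pairp S i j - marg S i * marg S j) * (b i \<bullet> b j))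
      = (\<Sum>i<n. \<Sum>j<n. \<Sum>e\<in>Basis. (b i \<bullet> e) * (b j \<bullet> e) * c i j)"
    unfolding c_def
    by (rule sum.cong[OF refl], rule sum.cong[OF refl])
       (simp add: euclidean_inner[of "b _" "b _"] sum_distrib_left mult.commute)
  also have "\<dots> = (\<Sum>i<n. \<Sum>e\<in>Basis. \<Sum>j<n. (b i \<bullet> e) * (b j \<bullet> e) * c i j)"
    by (rule sum.cong[OF refl], rule sum.swap)
  also have "\<dots> = (\<Sum>e\<in>Basis. \<Sum>i<n. \<Sum>j<n. (b i \<bullet> e) * (b j \<bullet> e) * c i j)"
    by (rule sum.swap)
  also have "\<dots> \<le> (\<Sum>e\<in>Basis. \<Sum>i<n. marg S i * v i * (b i \<bullet> e)\<^sup>2)"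
    by (rule sum_mono) (use es in \<open>simp add: eso_def c_def\<close>)
  also have "\<dots> = (\<Sum>i<n. \<Sum>e\<in>Basis. marg S i * v i * (b i \<bullet> e)\<^sup>2)"
    by (rule sum.swap)
  also have "\<dots> = (\<Sum>i<n. marg S i * v i * (norm (b i))\<^sup>2)"
  proof (rule sum.cong[OF refl])
    fix i
    have nb: "(norm (b i))\<^sup>2 = (\<Sum>e\<in>Basis. (b i \<bullet> e)\<^sup>2)"
      unfolding power2_norm_eq_inner by (subst euclidean_inner) (simp add: power2_eq_square)
    show "(\<Sum>e\<in>Basis. marg S i * v i * (b i \<bullet> e)\<^sup>2) = marg S i * v i * (norm (b i))\<^sup>2"
      unfolding nb by (simp add: sum_distrib_left)
  qed
  finally show ?thesis .
qed

lemma sampling_var: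
  fixes a :: "nat \<Rightarrow> 'a::euclidean_space" and A :: 'a
  assumes ps: "proper_sampling n S" and es: "eso n S v"
  shows "measure_pmf.expectation S
           (\<lambda>T. (norm (A + (\<Sum>i\<in>T. (1 / (real n * marg S i)) *\<^sub>R a i) - (1 / real n) *\<^sub>R (\<Sum>i<n. a i)))\<^sup>2)
    \<le> (norm A)\<^sup>2 + (\<Sum>i<n. v i * (norm (a i))\<^sup>2 / (marg S i * (real n)\<^sup>2))"
proof -
  define p where "p = marg S"
  define b where "b i = (1 / (real n * p i)) *\<^sub>R a i" for i
  define I where "I (i::nat) (T::nat set) = (indicator {A. i \<in> A} T :: real)" for i T
  have fS: "finite (set_pmf S)" by (rule fin_sampling[OF ps])
  have int: "integrable (measure_pmf S) f" for f :: "nat set \<Rightarrow> real"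
    by (rule integrable_measure_pmf_finite[OF fS])
  have pos: "p i > 0" if "i < n" for i using ps that unfolding proper_sampling_def p_def by auto
  have sub: "T \<subseteq> {..<n}" if "T \<in> set_pmf S" for T using ps that unfolding proper_sampling_def by auto
  define Z where "Z T = (\<Sum>i<n. (I i T - p i) *\<^sub>R b i)" for T
  have Zeq: "A + (\<Sum>i\<in>T. (1 / (real n * marg S i)) *\<^sub>R a i) - (1 / real n) *\<^sub>R (\<Sum>i<n. a i) = A + Z T"
    if T: "T \<in> set_pmf S" for T
  proof -
    have fT: "finite T" using sub[OF T] finite_subset by blast
    have 1: "(\<Sum>i\<in>T. (1 / (real n * marg S i)) *\<^sub>R a i) = (\<Sum>i<n. I i T *\<^sub>R b i)"
    proof -
      have "(\<Sum>i<n. I i T *\<^sub>R b i) = (\<Sum>i\<in>{..<n} \<inter> T. b i)"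
        by (subst sum.inter_restrict) (auto simp: I_def indicator_def intro!: sum.cong)
      also have "{..<n} \<inter> T = T" using sub[OF T] by blast
      finally show ?thesis by (simp add: b_def p_def)
    qed
    have 2: "(1 / real n) *\<^sub>R (\<Sum>i<n. a i) = (\<Sum>i<n. p i *\<^sub>R b i)"
      unfolding scaleR_sum_right
        by (rule sum.cong[OF refl]) (auto simp: b_def dest: pos)
    show ?thesis unfolding 1 2 Z_def
      by (simp add: scaleR_left_diff_distrib sum_subtractf algebra_simps)
  qed
  have nexp: "(norm (A + Z T))\<^sup>2 = (norm A)\<^sup>2 + 2 * (\<Sum>i<n. (I i T - p i) * (A \<bullet> b i))
      + (\<Sum>i<n. \<Sum>j<n. (I i T - p i) * (I j T - p j) * (b i \<bullet> b j))" for T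
    unfolding power2_norm_eq_inner Z_def
    by (simp add: inner_add_left inner_add_right inner_sum_left inner_sum_right
        sum_distrib_left inner_commute algebra_simps)
  have "measure_pmf.expectation S
           (\<lambda>T. (norm (A + (\<Sum>i\<in>T. (1 / (real n * marg S i)) *\<^sub>R a i) - (1 / real n) *\<^sub>R (\<Sum>i<n. a i)))\<^sup>2)
      = measure_pmf.expectation S (\<lambda>T. (norm A)\<^sup>2 + 2 * (\<Sum>i<n. (I i T - p i) * (A \<bullet> b i))
      + (\<Sum>i<n. \<Sum>j<n. (I i T - p i) * (I j T - p j) * (b i \<bullet> b j)))"
    by (rule pmf_integral_cong) (simp add: Zeq nexp)
  also have "\<dots> = (norm A)\<^sup>2 + 2 * (\<Sum>i<n. measure_pmf.expectation S (\<lambda>T. I i T - p i) * (A \<bullet> b i))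
      + (\<Sum>i<n. \<Sum>j<n. measure_pmf.expectation S (\<lambda>T. (I i T - p i) * (I j T - p j)) * (b i \<bullet> b j))"
    by (simp add: int)
  also have "\<dots> = (norm A)\<^sup>2 + (\<Sum>i<n. \<Sum>j<n. (pairp S i j - marg S i * marg S j) * (b i \<bullet> b j))"
    unfolding I_def p_def by (simp add: E_cov[OF fS] E_lin[OF fS])
  also have "\<dots> \<le> (norm A)\<^sup>2 + (\<Sum>i<n. marg S i * v i * (norm (b i))\<^sup>2)"
    using eso_quad[OF es, of b] by simp
  also have "(\<Sum>i<n. marg S i * v i * (norm (b i))\<^sup>2) = (\<Sum>i<n. v i * (norm (a i))\<^sup>2 / (marg S i * (real n)\<^sup>2))"
  proof (rule sum.cong[OF refl])
    fix i assume "i \<in> {..<n}"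
    then have pi: "p i > 0" using pos by auto
    have n0: "real n > 0" using \<open>i \<in> {..<n}\<close> by auto
    show "marg S i * v i * (norm (b i))\<^sup>2 = v i * (norm (a i))\<^sup>2 / (marg S i * (real n)\<^sup>2)"
      using pi n0 unfolding b_def p_def[symmetric]
      by (simp add: power2_eq_square field_simps)
  qed
  finally show ?thesis .
qed

lemma eso_nonneg:
  assumes ps: "proper_sampling n S" and es: "eso n S v" and i: "i < n"
  shows "0 \<le> v i"
proof -
  define h where "h k = (if k = i then 1 else 0 :: real)" for k
  have "(\<Sum>k<n. \<Sum>j<n. h k * h j * (pairp S k j - marg S k * marg S j))
       \<le> (\<Sum>k<n. marg S k * v k * (h k)\<^sup>2)"
    using es unfolding eso_def by blast
  also have "(\<Sum>k<n. \<Sum>j<n. h k * h j * (pairp S k j - marg S k * marg S j))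
           = pairp S i i - marg S i * marg S i"
  proof -
    have hs: "(\<Sum>j<n. h j * X j) = X i" for X :: "nat \<Rightarrow> real"
    proof -
      have "(\<Sum>j<n. h j * X j) = (\<Sum>j<n. if j = i then X j else 0)"
        by (rule sum.cong) (auto simp: h_def)
      then show ?thesis using i by simp
    qed
    have "(\<Sum>k<n. \<Sum>j<n. h k * h j * (pairp S k j - marg S k * marg S j))
        = (\<Sum>k<n. h k * (\<Sum>j<n. h j * (pairp S k j - marg S k * marg S j)))"
      by (simp add: sum_distrib_left mult.assoc)
    also have "\<dots> = (\<Sum>k<n. h k * (pairp S k i - marg S k * marg S i))"
      by (simp only: hs)
    also have "\<dots> = pairp S i i - marg S i * marg S i" by (rule hs)
    finally show ?thesis .
  qed
  also have "(\<Sum>k<n. marg S k * v k * (h k)\<^sup>2) = marg S i * v i"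
  proof -
    have "(\<Sum>k<n. marg S k * v k * (h k)\<^sup>2) = (\<Sum>k<n. if k = i then marg S k * v k else 0)"
      by (rule sum.cong) (auto simp: h_def)
    then show ?thesis using i by simp
  qed
  finally have 1: "pairp S i i - marg S i * marg S i \<le> marg S i * v i" .
  have pp: "pairp S i i = marg S i" unfolding pairp_def marg_def by simp
  have p0: "marg S i > 0" using ps i unfolding proper_sampling_def by auto
  have p1: "marg S i \<le> 1" unfolding marg_def by simp
  have "0 \<le> marg S i * (1 - marg S i)" using p0 p1 by simp
  also have "\<dots> \<le> marg S i * v i" using 1 pp by (simp add: algebra_simps)
  finally show ?thesis using p0 by (simp add: zero_le_mult_iff)
qed

lemma fin_inner:
  assumes po: "proper_sampling n Sout" and pi: "proper_sampling n Sin"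
  shows "finite (set_pmf (inner_run n g Sout Sin \<eta> sel x0 t))"
proof (induction t)
  case 0
  then show ?case using fin_sampling[OF po] by simp
next
  case (Suc t)
  show ?case
    by (simp only: inner_run.simps, rule finite_set_bind_pmf[OF Suc])
       (auto split: prod.splits simp: fin_sampling[OF pi])
qed

lemma fin_outer:
  assumes po: "proper_sampling n Sout" and pi: "proper_sampling n Sin"
  shows "finite (set_pmf (outer_start n g Sout Sin \<eta> m sel x1 j))"
proof (induction j)
  case 0
  then show ?case by simp
next
  case (Suc j)
  show ?case
    by (simp only: outer_start.simps, rule finite_set_bind_pmf[OF Suc])
       (auto simp: fin_inner[OF po pi])
qed

definition tr :: "nat \<Rightarrow> ((nat \<Rightarrow> 'a::zero) \<times> (nat \<Rightarrow> 'a)) \<Rightarrow> ((nat \<Rightarrow> 'a) \<times> (nat \<Rightarrow> 'a))" where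
  "tr s = (\<lambda>(xs, Vs). (\<lambda>k. if k \<le> Suc s then xs k else 0, \<lambda>k. if k \<le> s then Vs k else 0))"

lemma map_tr_step:
  assumes "s \<le> t"
  shows "map_pmf (tr s) (inner_run n g Sout Sin \<eta> sel x0 (Suc t))
       = map_pmf (tr s) (inner_run n g Sout Sin \<eta> sel x0 t)"
proof -
  have "map_pmf (tr s) (inner_run n g Sout Sin \<eta> sel x0 (Suc t))
      = bind_pmf (inner_run n g Sout Sin \<eta> sel x0 t) (\<lambda>st. return_pmf (tr s st))"
    unfolding inner_run.simps map_bind_pmf
  proof (rule bind_pmf_cong[OF refl])
    fix st :: "(nat \<Rightarrow> 'a) \<times> (nat \<Rightarrow> 'a)"
    obtain xs Vs where st: "st = (xs, Vs)" by (cases st)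
    show "map_pmf (tr s) ((\<lambda>(xs, Vs). map_pmf (\<lambda>S. let V = (\<Sum>i\<in>S. (1 / (real n * marg Sin i)) *\<^sub>R (g i (xs (Suc t)) - g i (xs t))) + Vs t
         in (xs(Suc (Suc t) := sel (Suc t) (xs (Suc t) - \<eta> *\<^sub>R V)), Vs(Suc t := V))) Sin) st)
        = return_pmf (tr s st)"
    proof -
      have c: "tr s (let V = (\<Sum>i\<in>S. (1 / (real n * marg Sin i)) *\<^sub>R (g i (xs (Suc t)) - g i (xs t))) + Vs t
         in (xs(Suc (Suc t) := sel (Suc t) (xs (Suc t) - \<eta> *\<^sub>R V)), Vs(Suc t := V))) = tr s (xs, Vs)" for S
        using assms by (simp add: Let_def tr_def fun_eq_iff)
      show ?thesis unfolding st by (simp only: prod.case map_pmf_comp c map_pmf_const)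
    qed
  qed
  also have "\<dots> = map_pmf (tr s) (inner_run n g Sout Sin \<eta> sel x0 t)"
    by (simp add: map_pmf_def)
  finally show ?thesis .
qed

lemma map_tr:
  assumes "s \<le> t"
  shows "map_pmf (tr s) (inner_run n g Sout Sin \<eta> sel x0 t)
       = map_pmf (tr s) (inner_run n g Sout Sin \<eta> sel x0 s)"
proof -
  have "map_pmf (tr s) (inner_run n g Sout Sin \<eta> sel x0 (s + d))
       = map_pmf (tr s) (inner_run n g Sout Sin \<eta> sel x0 s)" for d
  proof (induction d)
    case 0
    then show ?case by simp
  next
    case (Suc d)
    have "map_pmf (tr s) (inner_run n g Sout Sin \<eta> sel x0 (s + Suc d))
        = map_pmf (tr s) (inner_run n g Sout Sin \<eta> sel x0 (Suc (s + d)))"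
      by (simp only: add_Suc_right)
    also have "\<dots> = map_pmf (tr s) (inner_run n g Sout Sin \<eta> sel x0 (s + d))"
      by (rule map_tr_step) simp
    also have "\<dots> = map_pmf (tr s) (inner_run n g Sout Sin \<eta> sel x0 s)"
      by (rule Suc.IH)
    finally show ?case .
  qed
  from this[of "t - s"] show ?thesis using assms by simp
qed

lemma E_tr:
  fixes F :: "((nat \<Rightarrow> 'a::real_vector) \<times> (nat \<Rightarrow> 'a)) \<Rightarrow> real"
  assumes F: "\<And>st. F (tr s st) = F st" and st: "s \<le> t"
  shows "measure_pmf.expectation (inner_run n g Sout Sin \<eta> sel x0 t) F
       = measure_pmf.expectation (inner_run n g Sout Sin \<eta> sel x0 s) F"
proof -
  have "measure_pmf.expectation (inner_run n g Sout Sin \<eta> sel x0 t) F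
      = measure_pmf.expectation (map_pmf (tr s) (inner_run n g Sout Sin \<eta> sel x0 t)) F"
    by (simp add: F)
  also have "\<dots> = measure_pmf.expectation (map_pmf (tr s) (inner_run n g Sout Sin \<eta> sel x0 s)) F"
    by (simp only: map_tr[OF st])
  also have "\<dots> = measure_pmf.expectation (inner_run n g Sout Sin \<eta> sel x0 s) F"
    by (simp add: F)
  finally show ?thesis .
qed

lemma step_bound:
  fixes g :: "nat \<Rightarrow> 'a::euclidean_space \<Rightarrow> 'a" and L :: "nat \<Rightarrow> real"
  assumes po: "proper_sampling n Sout" and pi: "proper_sampling n Sin" and es: "eso n Sin v"
    and lip: "\<And>i x y. i < n \<Longrightarrow> norm (g i x - g i y) \<le> L i * norm (x - y)"
  shows "measure_pmf.expectation (inner_run n g Sout Sin \<eta> sel x0 (Suc s))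
           (\<lambda>(xs, Vs). (norm (Vs (Suc s) - (1 / real n) *\<^sub>R (\<Sum>i<n. g i (xs (Suc s)))))\<^sup>2)
   \<le> measure_pmf.expectation (inner_run n g Sout Sin \<eta> sel x0 s)
           (\<lambda>(xs, Vs). (norm (Vs s - (1 / real n) *\<^sub>R (\<Sum>i<n. g i (xs s))))\<^sup>2)
     + (\<Sum>i<n. v i * (L i)\<^sup>2 / (marg Sin i * (real n)\<^sup>2))
       * measure_pmf.expectation (inner_run n g Sout Sin \<eta> sel x0 s)
           (\<lambda>(xs, Vs). (norm (xs (Suc s) - xs s))\<^sup>2)"
proof -
  define D where "D = inner_run n g Sout Sin \<eta> sel x0 s"
  define Q where "Q = (\<Sum>i<n. v i * (L i)\<^sup>2 / (marg Sin i * (real n)\<^sup>2))"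
  define K where "K = (\<lambda>(xs, Vs). map_pmf (\<lambda>S.
         let V = (\<Sum>i\<in>S. (1 / (real n * marg Sin i)) *\<^sub>R (g i (xs (Suc s)) - g i (xs s))) + Vs s
         in (xs(Suc (Suc s) := sel (Suc s) (xs (Suc s) - \<eta> *\<^sub>R V)), Vs(Suc s := V))) Sin)"
  define e1 where "e1 = (\<lambda>(xs, Vs). (norm (Vs (Suc s) - (1 / real n) *\<^sub>R (\<Sum>i<n. g i (xs (Suc s)))))\<^sup>2)"
  define e0 where "e0 = (\<lambda>(xs, Vs). (norm (Vs s - (1 / real n) *\<^sub>R (\<Sum>i<n. g i (xs s))))\<^sup>2)"
  define dd where "dd = (\<lambda>(xs::nat \<Rightarrow> 'a, Vs::nat \<Rightarrow> 'a). (norm (xs (Suc s) - xs s))\<^sup>2)"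
  have fD: "finite (set_pmf D)" unfolding D_def by (rule fin_inner[OF po pi])
  have fK: "finite (set_pmf (K st))" for st
    unfolding K_def using fin_sampling[OF pi] by (auto split: prod.splits)
  have intD: "integrable (measure_pmf D) f" for f :: "_ \<Rightarrow> real"
    by (rule integrable_measure_pmf_finite[OF fD])
  have Dsuc: "inner_run n g Sout Sin \<eta> sel x0 (Suc s) = bind_pmf D K"
    unfolding D_def K_def by simp
  have pw: "measure_pmf.expectation (K st) e1 \<le> e0 st + Q * dd st" for st
  proof -
    obtain xs Vs where st: "st = (xs, Vs)" by (cases st)
    define A where "A = Vs s - (1 / real n) *\<^sub>R (\<Sum>i<n. g i (xs s))"
    define a where "a i = g i (xs (Suc s)) - g i (xs s)" for i
    have "measure_pmf.expectation (K st) e1 = measure_pmf.expectation Sin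
       (\<lambda>T. (norm (A + (\<Sum>i\<in>T. (1 / (real n * marg Sin i)) *\<^sub>R a i) - (1 / real n) *\<^sub>R (\<Sum>i<n. a i)))\<^sup>2)"
      unfolding st K_def e1_def A_def a_def
      by (simp add: Let_def sum_subtractf scaleR_diff_right algebra_simps)
    also have "\<dots> \<le> (norm A)\<^sup>2 + (\<Sum>i<n. v i * (norm (a i))\<^sup>2 / (marg Sin i * (real n)\<^sup>2))"
      by (rule sampling_var[OF pi es])
    also have "(\<Sum>i<n. v i * (norm (a i))\<^sup>2 / (marg Sin i * (real n)\<^sup>2)) \<le> Q * dd st"
    proof -
      have "(\<Sum>i<n. v i * (norm (a i))\<^sup>2 / (marg Sin i * (real n)\<^sup>2))
          \<le> (\<Sum>i<n. v i * (L i)\<^sup>2 / (marg Sin i * (real n)\<^sup>2) * (norm (xs (Suc s) - xs s))\<^sup>2)"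
      proof (rule sum_mono)
        fix i assume "i \<in> {..<n}"
        then have i: "i < n" by simp
        have v0: "0 \<le> v i" by (rule eso_nonneg[OF pi es i])
        have p0: "0 < marg Sin i" using pi i unfolding proper_sampling_def by auto
        have "norm (a i) \<le> L i * norm (xs (Suc s) - xs s)" unfolding a_def by (rule lip[OF i])
        then have "(norm (a i))\<^sup>2 \<le> (L i * norm (xs (Suc s) - xs s))\<^sup>2"
          by (rule power_mono) simp
        then have "(norm (a i))\<^sup>2 \<le> (L i)\<^sup>2 * (norm (xs (Suc s) - xs s))\<^sup>2"
          by (simp add: power_mult_distrib)
        then have "v i * (norm (a i))\<^sup>2 \<le> v i * ((L i)\<^sup>2 * (norm (xs (Suc s) - xs s))\<^sup>2)"
          by (rule mult_left_mono) (rule v0)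
        then show "v i * (norm (a i))\<^sup>2 / (marg Sin i * (real n)\<^sup>2)
          \<le> v i * (L i)\<^sup>2 / (marg Sin i * (real n)\<^sup>2) * (norm (xs (Suc s) - xs s))\<^sup>2"
          using p0 i by (simp add: divide_right_mono algebra_simps)
      qed
      also have "\<dots> = Q * dd st"
        unfolding Q_def dd_def st by (simp add: sum_distrib_right)
      finally show ?thesis .
    qed
    finally show ?thesis unfolding e0_def st A_def by simp
  qed
  have "measure_pmf.expectation (bind_pmf D K) e1 = measure_pmf.expectation D (\<lambda>st. measure_pmf.expectation (K st) e1)"
    by (rule integral_bind_pmf_fin[OF fD fK])
  also have "\<dots> \<le> measure_pmf.expectation D (\<lambda>st. e0 st + Q * dd st)"
    by (rule integral_mono[OF intD intD pw])
  also have "\<dots> = measure_pmf.expectation D e0 + Q * measure_pmf.expectation D dd"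
    by (simp add: intD)
  finally show ?thesis unfolding Dsuc D_def Q_def e0_def e1_def dd_def .
qed

lemma init_bound:
  fixes g :: "nat \<Rightarrow> 'a::euclidean_space \<Rightarrow> 'a" and G :: "nat \<Rightarrow> real"
  assumes po: "proper_sampling n Sout" and es: "eso n Sout v'"
    and bounded: "\<And>i x. i < n \<Longrightarrow> norm (g i x) \<le> G i"
  shows "measure_pmf.expectation (inner_run n g Sout Sin \<eta> sel x0 0)
           (\<lambda>(xs, Vs). (norm (Vs 0 - (1 / real n) *\<^sub>R (\<Sum>i<n. g i (xs 0))))\<^sup>2)
   \<le> (\<Sum>i<n. v' i * (G i)\<^sup>2 / (marg Sout i * (real n)\<^sup>2))"
proof -
  have "measure_pmf.expectation (inner_run n g Sout Sin \<eta> sel x0 0)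
           (\<lambda>(xs, Vs). (norm (Vs 0 - (1 / real n) *\<^sub>R (\<Sum>i<n. g i (xs 0))))\<^sup>2)
      = measure_pmf.expectation Sout
       (\<lambda>T. (norm (0 + (\<Sum>i\<in>T. (1 / (real n * marg Sout i)) *\<^sub>R g i x0) - (1 / real n) *\<^sub>R (\<Sum>i<n. g i x0)))\<^sup>2)"
    by simp
  also have "\<dots> \<le> (norm (0::'a))\<^sup>2 + (\<Sum>i<n. v' i * (norm (g i x0))\<^sup>2 / (marg Sout i * (real n)\<^sup>2))"
    by (rule sampling_var[OF po es])
  also have "\<dots> \<le> (\<Sum>i<n. v' i * (G i)\<^sup>2 / (marg Sout i * (real n)\<^sup>2))"
  proof -
    have "(\<Sum>i<n. v' i * (norm (g i x0))\<^sup>2 / (marg Sout i * (real n)\<^sup>2))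
        \<le> (\<Sum>i<n. v' i * (G i)\<^sup>2 / (marg Sout i * (real n)\<^sup>2))"
    proof (rule sum_mono)
      fix i assume "i \<in> {..<n}"
      then have i: "i < n" by simp
      have v0: "0 \<le> v' i" by (rule eso_nonneg[OF po es i])
      have p0: "0 < marg Sout i" using po i unfolding proper_sampling_def by auto
      have "(norm (g i x0))\<^sup>2 \<le> (G i)\<^sup>2"
        by (rule power_mono[OF bounded[OF i]]) simp
      then have "v' i * (norm (g i x0))\<^sup>2 \<le> v' i * (G i)\<^sup>2"
        by (rule mult_left_mono) (rule v0)
      then show "v' i * (norm (g i x0))\<^sup>2 / (marg Sout i * (real n)\<^sup>2)
          \<le> v' i * (G i)\<^sup>2 / (marg Sout i * (real n)\<^sup>2)"
        using p0 i by (simp add: divide_right_mono)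
    qed
    then show ?thesis by simp
  qed
  finally show ?thesis .
qed

lemma chain_bound:
  fixes g :: "nat \<Rightarrow> 'a::euclidean_space \<Rightarrow> 'a" and G L :: "nat \<Rightarrow> real"
  assumes po: "proper_sampling n Sout" and eso': "eso n Sout v'"
    and pi: "proper_sampling n Sin" and es: "eso n Sin v"
    and bounded: "\<And>i x. i < n \<Longrightarrow> norm (g i x) \<le> G i"
    and lip: "\<And>i x y. i < n \<Longrightarrow> norm (g i x - g i y) \<le> L i * norm (x - y)"
  shows "t \<le> m \<Longrightarrow> measure_pmf.expectation (inner_run n g Sout Sin \<eta> sel x0 m)
           (\<lambda>(xs, Vs). (norm (Vs t - (1 / real n) *\<^sub>R (\<Sum>i<n. g i (xs t))))\<^sup>2)
   \<le> (\<Sum>i<n. v i * (L i)\<^sup>2 / (marg Sin i * (real n)\<^sup>2))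
       * (\<Sum>k = 1..t. measure_pmf.expectation (inner_run n g Sout Sin \<eta> sel x0 m)
            (\<lambda>(xs, Vs). (norm (xs k - xs (k - 1)))\<^sup>2))
     + (\<Sum>i<n. v' i * (G i)\<^sup>2 / (marg Sout i * (real n)\<^sup>2))"
proof (induction t)
  case 0
  have "measure_pmf.expectation (inner_run n g Sout Sin \<eta> sel x0 m)
           (\<lambda>(xs, Vs). (norm (Vs 0 - (1 / real n) *\<^sub>R (\<Sum>i<n. g i (xs 0))))\<^sup>2)
      = measure_pmf.expectation (inner_run n g Sout Sin \<eta> sel x0 0)
           (\<lambda>(xs, Vs). (norm (Vs 0 - (1 / real n) *\<^sub>R (\<Sum>i<n. g i (xs 0))))\<^sup>2)"
    by (rule E_tr) (auto simp: tr_def split: prod.splits)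
  also have "\<dots> \<le> (\<Sum>i<n. v' i * (G i)\<^sup>2 / (marg Sout i * (real n)\<^sup>2))"
    by (rule init_bound[OF po eso' bounded])
  finally show ?case by simp
next
  case (Suc t)
  let ?D = "\<lambda>s. inner_run n g Sout Sin \<eta> sel x0 s"
  let ?Q = "(\<Sum>i<n. v i * (L i)\<^sup>2 / (marg Sin i * (real n)\<^sup>2))"
  let ?Q' = "(\<Sum>i<n. v' i * (G i)\<^sup>2 / (marg Sout i * (real n)\<^sup>2))"
  let ?dx = "\<lambda>k. (\<lambda>(xs::nat \<Rightarrow> 'a, Vs::nat \<Rightarrow> 'a). (norm (xs k - xs (k - 1)))\<^sup>2)"
  have tm: "t \<le> m" using Suc.prems by simp
  have "measure_pmf.expectation (?D m)
           (\<lambda>(xs, Vs). (norm (Vs (Suc t) - (1 / real n) *\<^sub>R (\<Sum>i<n. g i (xs (Suc t)))))\<^sup>2)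
      = measure_pmf.expectation (?D (Suc t))
           (\<lambda>(xs, Vs). (norm (Vs (Suc t) - (1 / real n) *\<^sub>R (\<Sum>i<n. g i (xs (Suc t)))))\<^sup>2)"
    by (rule E_tr) (use Suc.prems in \<open>auto simp: tr_def split: prod.splits\<close>)
  also have "\<dots> \<le> measure_pmf.expectation (?D t)
           (\<lambda>(xs, Vs). (norm (Vs t - (1 / real n) *\<^sub>R (\<Sum>i<n. g i (xs t))))\<^sup>2)
     + ?Q * measure_pmf.expectation (?D t) (\<lambda>(xs, Vs). (norm (xs (Suc t) - xs t))\<^sup>2)"
    by (rule step_bound[OF po pi es lip])
  also have "measure_pmf.expectation (?D t)
           (\<lambda>(xs, Vs). (norm (Vs t - (1 / real n) *\<^sub>R (\<Sum>i<n. g i (xs t))))\<^sup>2)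
      = measure_pmf.expectation (?D m)
           (\<lambda>(xs, Vs). (norm (Vs t - (1 / real n) *\<^sub>R (\<Sum>i<n. g i (xs t))))\<^sup>2)"
    by (rule E_tr[symmetric]) (use tm in \<open>auto simp: tr_def split: prod.splits\<close>)
  also have "measure_pmf.expectation (?D t) (\<lambda>(xs, Vs). (norm (xs (Suc t) - xs t))\<^sup>2)
      = measure_pmf.expectation (?D m) (?dx (Suc t))"
    unfolding diff_Suc_1 by (rule E_tr[symmetric]) (use tm in \<open>auto simp: tr_def split: prod.splits\<close>)
  finally have 1: "measure_pmf.expectation (?D m)
           (\<lambda>(xs, Vs). (norm (Vs (Suc t) - (1 / real n) *\<^sub>R (\<Sum>i<n. g i (xs (Suc t)))))\<^sup>2)
     \<le> measure_pmf.expectation (?D m)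
           (\<lambda>(xs, Vs). (norm (Vs t - (1 / real n) *\<^sub>R (\<Sum>i<n. g i (xs t))))\<^sup>2)
       + ?Q * measure_pmf.expectation (?D m) (?dx (Suc t))" .
  have 2: "(\<Sum>k = 1..Suc t. measure_pmf.expectation (?D m) (?dx k))
      = (\<Sum>k = 1..t. measure_pmf.expectation (?D m) (?dx k)) + measure_pmf.expectation (?D m) (?dx (Suc t))"
    by simp
  show ?case using 1 Suc.IH[OF tm] unfolding 2 by (simp add: algebra_simps)
qed

theorem lemma6p1:
  fixes n m :: nat and d_f :: "nat \<Rightarrow> 'a::euclidean_space \<Rightarrow> real"
    and g :: "nat \<Rightarrow> 'a \<Rightarrow> 'a" and G L :: "nat \<Rightarrow> real"
    and Sout Sin :: "nat set pmf" and v v' :: "nat \<Rightarrow> real"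
    and r :: "'a \<Rightarrow> real" and \<eta> :: real
    and sel :: "nat \<Rightarrow> nat \<Rightarrow> 'a \<Rightarrow> 'a" and x1 :: 'a
    and j t :: nat
  assumes n_pos: "0 < n"
    and grad: "\<And>i x. i < n \<Longrightarrow> (d_f i has_derivative (\<lambda>h. g i x \<bullet> h)) (at x)"
    and bounded: "\<And>i x. i < n \<Longrightarrow> norm (g i x) \<le> G i"
    and lipschitz: "\<And>i x y. i < n \<Longrightarrow> norm (g i x - g i y) \<le> L i * norm (x - y)"
    and outer_proper: "proper_sampling n Sout" and outer_eso: "eso n Sout v'"
    and inner_proper: "proper_sampling n Sin" and inner_eso: "eso n Sin v"
    and eta_pos: "0 < \<eta>"
    and sel_prox: "\<And>j t y. sel j t y \<in> prox \<eta> r y"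
    and j: "1 \<le> j" and t: "1 \<le> t" "t \<le> m"
  shows "(let D = epoch_traj n g Sout Sin \<eta> m sel x1 j;
              Q = (\<Sum>i<n. v i * (L i)\<^sup>2 / (marg Sin i * (real n)\<^sup>2));
              Q' = (\<Sum>i<n. v' i * (G i)\<^sup>2 / (marg Sout i * (real n)\<^sup>2))
          in measure_pmf.expectation D
               (\<lambda>(xs, Vs). (norm (Vs t - (1 / real n) *\<^sub>R (\<Sum>i<n. g i (xs t))))\<^sup>2)
             \<le> Q * (\<Sum>k = 1..t. measure_pmf.expectation D (\<lambda>(xs, Vs). (norm (xs k - xs (k - 1)))\<^sup>2))
               + Q')"
proof -
  define Om where "Om = outer_start n g Sout Sin \<eta> m sel x1 (j - 1)"
  define D where "D x = inner_run n g Sout Sin \<eta> (sel j) x m" for x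
  define Q where "Q = (\<Sum>i<n. v i * (L i)\<^sup>2 / (marg Sin i * (real n)\<^sup>2))"
  define Q' where "Q' = (\<Sum>i<n. v' i * (G i)\<^sup>2 / (marg Sout i * (real n)\<^sup>2))"
  define err where "err = (\<lambda>(xs, Vs). (norm (Vs t - (1 / real n) *\<^sub>R (\<Sum>i<n. g i (xs t))))\<^sup>2)"
  define dx where "dx k = (\<lambda>(xs::nat \<Rightarrow> 'a, Vs::nat \<Rightarrow> 'a). (norm (xs k - xs (k - 1)))\<^sup>2)" for k
  have fO: "finite (set_pmf Om)" unfolding Om_def by (rule fin_outer[OF outer_proper inner_proper])
  have fD: "finite (set_pmf (D x))" for x unfolding D_def by (rule fin_inner[OF outer_proper inner_proper])
  have intO: "integrable (measure_pmf Om) f" for f :: "_ \<Rightarrow> real"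
    by (rule integrable_measure_pmf_finite[OF fO])
  have ET: "epoch_traj n g Sout Sin \<eta> m sel x1 j = bind_pmf Om D"
    unfolding epoch_traj_def Om_def D_def ..
  have "measure_pmf.expectation (bind_pmf Om D) err = measure_pmf.expectation Om (\<lambda>x. measure_pmf.expectation (D x) err)"
    by (rule integral_bind_pmf_fin[OF fO fD])
  also have "\<dots> \<le> measure_pmf.expectation Om (\<lambda>x. Q * (\<Sum>k = 1..t. measure_pmf.expectation (D x) (dx k)) + Q')"
  proof (rule integral_mono[OF intO intO])
    fix x
    show "measure_pmf.expectation (D x) err \<le> Q * (\<Sum>k = 1..t. measure_pmf.expectation (D x) (dx k)) + Q'"
      unfolding D_def err_def dx_def Q_def Q'_def
      by (rule chain_bound[OF outer_proper outer_eso inner_proper inner_eso bounded lipschitz t(2)])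
  qed
  also have "\<dots> = Q * (\<Sum>k = 1..t. measure_pmf.expectation Om (\<lambda>x. measure_pmf.expectation (D x) (dx k))) + Q'"
    by (simp add: intO)
  also have "(\<Sum>k = 1..t. measure_pmf.expectation Om (\<lambda>x. measure_pmf.expectation (D x) (dx k)))
      = (\<Sum>k = 1..t. measure_pmf.expectation (bind_pmf Om D) (dx k))"
    by (rule sum.cong[OF refl]) (rule integral_bind_pmf_fin[OF fO fD, symmetric])
  finally show ?thesis
    unfolding Let_def ET Q_def Q'_def err_def dx_def .
qed

end
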